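(* Let $(W,S)$ be an irreducible right-angled Coxeter system and let $w\in W$. Suppose $t_1,\dots,t_n\in S$ satisfy (1) $t_1\notin S(w)$, (2) $o(t_it_{i+1})=\infty$ for all $i\in\{1,\dots,n-1\}$, and (3) $\{t_1,\dots,t_n\}=S$. Then $w t_1t_2\cdots t_n\in W^{\{t_n\}}$.
   Context: A Coxeter system $(W,S)$: $S$ finite, $W=\langle S\mid (st)^{m(s,t)}=1\rangle$ with $m(s,s)=1$, $m(s,t)=m(t,s)\ge2$ for $s\ne t$. Right-angled: $m(s,t)\in\{2,\infty\}$ for $s\ne t$. Irreducible: for no nonempty proper $T\subset S$ is $W=W_T\times W_{S\setminus T}$. $o(st)$ is the order of $st$; $\ell$ is word length with respect to $S$; $S(w)=\{s\in S\mid\ell(ws)<\ell(w)\}$; $W^T=\{w\in W\mid S(w)=T\}$. *)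

theory Defs
  imports Main "HOL-Library.Extended_Nat"
begin

definition coxeter_matrix :: "'a set \<Rightarrow> ('a \<Rightarrow> 'a \<Rightarrow> enat) \<Rightarrow> bool" where
  "coxeter_matrix S m \<longleftrightarrow> finite S \<and> (\<forall>s\<in>S. m s s = 1) \<and>
     (\<forall>s\<in>S. \<forall>t\<in>S. m s t = m t s) \<and> (\<forall>s\<in>S. \<forall>t\<in>S. s \<noteq> t \<longrightarrow> m s t \<ge> 2)"

definition right_angled :: "'a set \<Rightarrow> ('a \<Rightarrow> 'a \<Rightarrow> enat) \<Rightarrow> bool" where
  "right_angled S m \<longleftrightarrow> (\<forall>s\<in>S. \<forall>t\<in>S. s \<noteq> t \<longrightarrow> m s t = 2 \<or> m s t = \<infinity>)"

text \<open>Elements of W are represented by words over S; two words represent the same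
  element iff they are related by the congruence generated by the relations (st)^m(s,t) = 1.\<close>
inductive cox_eq :: "'a set \<Rightarrow> ('a \<Rightarrow> 'a \<Rightarrow> enat) \<Rightarrow> 'a list \<Rightarrow> 'a list \<Rightarrow> bool"
  for S m where
  rel: "s \<in> S \<Longrightarrow> t \<in> S \<Longrightarrow> m s t = enat k \<Longrightarrow>
        cox_eq S m (xs @ concat (replicate k [s, t]) @ ys) (xs @ ys)"
| refl: "cox_eq S m u u"
| sym: "cox_eq S m u v \<Longrightarrow> cox_eq S m v u"
| trans: "cox_eq S m u v \<Longrightarrow> cox_eq S m v w \<Longrightarrow> cox_eq S m u w"

definition cox_len :: "'a set \<Rightarrow> ('a \<Rightarrow> 'a \<Rightarrow> enat) \<Rightarrow> 'a list \<Rightarrow> nat" where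
  "cox_len S m w = (LEAST n. \<exists>v. set v \<subseteq> S \<and> length v = n \<and> cox_eq S m v w)"

definition cox_desc :: "'a set \<Rightarrow> ('a \<Rightarrow> 'a \<Rightarrow> enat) \<Rightarrow> 'a list \<Rightarrow> 'a set" where
  "cox_desc S m w = {s \<in> S. cox_len S m (w @ [s]) < cox_len S m w}"

definition cox_WT :: "'a set \<Rightarrow> ('a \<Rightarrow> 'a \<Rightarrow> enat) \<Rightarrow> 'a set \<Rightarrow> 'a list set" where
  "cox_WT S m T = {w. set w \<subseteq> S \<and> cox_desc S m w = T}"

definition cox_order_inf :: "'a set \<Rightarrow> ('a \<Rightarrow> 'a \<Rightarrow> enat) \<Rightarrow> 'a \<Rightarrow> 'a \<Rightarrow> bool" where
  "cox_order_inf S m s t \<longleftrightarrow> (\<forall>k>0. \<not> cox_eq S m (concat (replicate k [s, t])) [])"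

text \<open>Irreducible: for no nonempty proper T \<subset> S is W the (internal) direct product
  W_T \<times> W_{S-T}, i.e. the two standard parabolic subgroups (which together generate W)
  commute elementwise and intersect trivially.\<close>
definition cox_irreducible :: "'a set \<Rightarrow> ('a \<Rightarrow> 'a \<Rightarrow> enat) \<Rightarrow> bool" where
  "cox_irreducible S m \<longleftrightarrow> \<not> (\<exists>T. T \<noteq> {} \<and> T \<subset> S \<and>
     (\<forall>u v. set u \<subseteq> T \<longrightarrow> set v \<subseteq> S - T \<longrightarrow> cox_eq S m (u @ v) (v @ u)) \<and>
     (\<forall>u v. set u \<subseteq> T \<longrightarrow> set v \<subseteq> S - T \<longrightarrow> cox_eq S m u v \<longrightarrow> cox_eq S m u []))"

end

theory Submission
  imports Defs
begin



locale racg =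
  fixes S :: "'a set" and m :: "'a \<Rightarrow> 'a \<Rightarrow> enat"
  assumes cm: "coxeter_matrix S m" and ra: "right_angled S m"
begin

abbreviation ceq where "ceq \<equiv> cox_eq S m"

lemma ceq_cong: "ceq u v \<Longrightarrow> ceq (a@u@b) (a@v@b)"
proof (induction rule: cox_eq.induct)
  case (rel s t k xs ys)
  then show ?case using cox_eq.rel[of s S t m k "a@xs" "ys@b"] by simp
next
  case (refl u) then show ?case by (rule cox_eq.refl)
next
  case (sym u v) then show ?case by (metis cox_eq.sym)
next
  case (trans u v w) then show ?case by (metis cox_eq.trans)
qed

lemma ceq_app: "ceq u u' \<Longrightarrow> ceq v v' \<Longrightarrow> ceq (u@v) (u'@v')"
  using ceq_cong[of u u' "[]" v] ceq_cong[of v v' u' "[]"] by (auto intro: cox_eq.trans)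

lemmas ceq_s = cox_eq.sym
lemmas ceq_t = cox_eq.trans
lemmas ceq_r = cox_eq.refl

lemma blk: "s\<in>S \<Longrightarrow> t\<in>S \<Longrightarrow> m s t = enat k \<Longrightarrow> (s = t \<and> k = 1) \<or> (s \<noteq> t \<and> k = 2)"
  using cm ra unfolding coxeter_matrix_def right_angled_def
  by (metis enat.distinct(1) infinity_ne_i1 numeral_eq_enat enat.inject one_enat_def)

lemma msym: "s\<in>S \<Longrightarrow> t\<in>S \<Longrightarrow> m s t = m t s"
  using cm unfolding coxeter_matrix_def by auto

lemma ss: "s\<in>S \<Longrightarrow> ceq [s,s] []"
proof -
  assume s: "s\<in>S"
  have "m s s = enat 1" using cm s unfolding coxeter_matrix_def by (simp add: one_enat_def)
  from cox_eq.rel[of s S s m 1 "[]" "[]", OF s s this] show ?thesis by simp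
qed

lemma stst: "s\<in>S \<Longrightarrow> t\<in>S \<Longrightarrow> m s t = 2 \<Longrightarrow> ceq [s,t,s,t] []"
proof -
  assume s: "s\<in>S" and t: "t\<in>S" and "m s t = 2"
  then have "m s t = enat 2" by (simp add: numeral_eq_enat)
  from cox_eq.rel[of s S t m 2 "[]" "[]", OF s t this] show ?thesis by (simp add: numeral_2_eq_2)
qed

lemma self_inv: "set u \<subseteq> S \<Longrightarrow> ceq (u @ rev u) []"
proof (induction u)
  case Nil then show ?case by (simp add: ceq_r)
next
  case (Cons x u)
  then have "ceq ([x] @ (u @ rev u) @ [x]) ([x]@[]@[x])" by (intro ceq_cong) auto
  moreover have "ceq [x,x] []" using Cons by (intro ss) auto
  ultimately show ?case by (auto intro: ceq_t)
qed

lemma self_inv': "set u \<subseteq> S \<Longrightarrow> ceq (rev u @ u) []"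
  using self_inv[of "rev u"] by simp

lemma cancel_l: "set u \<subseteq> S \<Longrightarrow> ceq (u@a) (u@b) \<Longrightarrow> ceq a b"
proof -
  assume u: "set u \<subseteq> S" and h: "ceq (u@a) (u@b)"
  have 1: "ceq ((rev u @ u) @ a) ([] @ a)" by (rule ceq_app[OF self_inv'[OF u] ceq_r])
  have 2: "ceq ((rev u @ u) @ b) ([] @ b)" by (rule ceq_app[OF self_inv'[OF u] ceq_r])
  have 3: "ceq (rev u @ (u @ a)) (rev u @ (u@b))" by (rule ceq_app[OF ceq_r h])
  from 1 2 3 show ?thesis by simp (meson ceq_s ceq_t)
qed

lemma cancel_r: "set u \<subseteq> S \<Longrightarrow> ceq (a@u) (b@u) \<Longrightarrow> ceq a b"
proof -
  assume u: "set u \<subseteq> S" and h: "ceq (a@u) (b@u)"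
  have 1: "ceq (a @ (u @ rev u)) (a @ [])" by (rule ceq_app[OF ceq_r self_inv[OF u]])
  have 2: "ceq (b @ (u @ rev u)) (b @ [])" by (rule ceq_app[OF ceq_r self_inv[OF u]])
  have 3: "ceq ((a @ u) @ rev u) ((b@u) @ rev u)" by (rule ceq_app[OF h ceq_r])
  from 1 2 3 show ?thesis by simp (meson ceq_s ceq_t)
qed

lemma rev_cong: "ceq u v \<Longrightarrow> ceq (rev u) (rev v)"
proof (induction rule: cox_eq.induct)
  case (rel s t k xs ys)
  have mts: "m t s = enat k" using rel msym by auto
  from blk[OF rel(1,2,3)] consider "s = t" "k = 1" | "k = 2" by auto
  then show ?case
  proof cases
    case 1
    then show ?thesis using cox_eq.rel[of t S s m k "rev ys" "rev xs", OF rel(2,1) mts] by simp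
  next
    case 2
    then show ?thesis using cox_eq.rel[of t S s m k "rev ys" "rev xs", OF rel(2,1) mts]
      by (simp add: numeral_2_eq_2)
  qed
next
  case (refl u) then show ?case by (rule cox_eq.refl)
next
  case (sym u v) then show ?case by (metis cox_eq.sym)
next
  case (trans u v w) then show ?case by (metis cox_eq.trans)
qed

end



context racg begin

lemma len_le: "set v \<subseteq> S \<Longrightarrow> ceq v w \<Longrightarrow> cox_len S m w \<le> length v"
  unfolding cox_len_def by (rule Least_le) blast

lemma len_ex: "set w \<subseteq> S \<Longrightarrow> \<exists>v. set v \<subseteq> S \<and> length v = cox_len S m w \<and> ceq v w"
  unfolding cox_len_def by (rule LeastI_ex) (blast intro: ceq_r)

lemma len_cong: "ceq w w' \<Longrightarrow> cox_len S m w = cox_len S m w'"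
  unfolding cox_len_def by (metis ceq_t ceq_s)

lemma desc_cong: "ceq w w' \<Longrightarrow> cox_desc S m w = cox_desc S m w'"
  unfolding cox_desc_def using len_cong ceq_app[OF _ ceq_r] by metis

lemma par: "ceq u v \<Longrightarrow> even (length u) = even (length v)"
proof (induction rule: cox_eq.induct)
  case (rel s t k xs ys)
  have "length (concat (replicate k [s,t])) = 2*k"
    by (induction k) auto
  then show ?case by simp
qed auto

lemma cnt: "ceq u v \<Longrightarrow> even (count_list u r) = even (count_list v r)"
proof (induction rule: cox_eq.induct)
  case (rel s t k xs ys)
  from blk[OF rel] consider "s = t" "k = 1" | "k = 2" by auto
  then show ?case
  proof cases
    case 1 then show ?thesis by simp
  next
    case 2
    then have "concat (replicate k [s,t]) = [s,t,s,t]" by (simp add: numeral_2_eq_2)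
    then show ?thesis by simp
  qed
qed auto

lemma letter_ne: "r \<noteq> s \<Longrightarrow> \<not> ceq [r] [s]"
  using cnt[of "[r]" "[s]" r] by auto

lemma len_par: "set x \<subseteq> S \<Longrightarrow> s\<in>S \<Longrightarrow> cox_len S m (x@[s]) \<noteq> cox_len S m x"
proof -
  assume x: "set x \<subseteq> S" and s: "s\<in>S"
  obtain v where v: "set v \<subseteq> S" "length v = cox_len S m x" "ceq v x" using len_ex[OF x] by blast
  obtain v' where v': "set v' \<subseteq> S" "length v' = cox_len S m (x@[s])" "ceq v' (x@[s])"
    using len_ex[of "x@[s]"] x s by auto
  have "ceq (v@[s]) (x@[s])" using ceq_app[OF v(3) ceq_r] .
  then have "ceq v' (v@[s])" using v'(3) by (meson ceq_s ceq_t)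
  from par[OF this] v v' show ?thesis by auto
qed

lemma len_snoc_le: "set x \<subseteq> S \<Longrightarrow> s\<in>S \<Longrightarrow> cox_len S m (x@[s]) \<le> cox_len S m x + 1"
proof -
  assume x: "set x \<subseteq> S" and s: "s\<in>S"
  obtain v where v: "set v \<subseteq> S" "length v = cox_len S m x" "ceq v x" using len_ex[OF x] by blast
  have "ceq (v@[s]) (x@[s])" using ceq_app[OF v(3) ceq_r] .
  from len_le[OF _ this] v s show ?thesis by auto
qed

lemma snoc2: "s\<in>S \<Longrightarrow> ceq (x@[s]@[s]) x"
  using ceq_app[OF ceq_r ss, of s x] by simp

lemma nondesc_lt: "set x \<subseteq> S \<Longrightarrow> s\<in>S \<Longrightarrow> s \<notin> cox_desc S m x \<Longrightarrow> cox_len S m x < cox_len S m (x@[s])"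
  using len_par[of x s] unfolding cox_desc_def by auto

lemma nondesc_desc: "set x \<subseteq> S \<Longrightarrow> s\<in>S \<Longrightarrow> s \<notin> cox_desc S m x \<Longrightarrow> s \<in> cox_desc S m (x@[s])"
  using nondesc_lt[of x s] len_cong[OF snoc2[of s x]] unfolding cox_desc_def by auto

definition sd :: "'b set \<Rightarrow> 'b set \<Rightarrow> 'b set" where "sd A B = (A - B) \<union> (B - A)"
definition cls where "cls u = {v. ceq u v}"
definition cj :: "'a list \<Rightarrow> 'a list set \<Rightarrow> 'a list set" where "cj a A = {v. rev a @ v @ a \<in> A}"

fun NN where "NN [] = {}" | "NN (s#x) = sd (cls [s]) (cj [s] (NN x))"

lemma cj_sd: "cj a (sd A B) = sd (cj a A) (cj a B)" by (auto simp: cj_def sd_def)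
lemma cj_app: "cj (a@b) A = cj a (cj b A)" by (simp add: cj_def)
lemma cj_nil: "cj [] A = A" by (simp add: cj_def)
lemma cj_empty: "cj a {} = {}" by (simp add: cj_def)
lemma sd_assoc: "sd (sd A B) C = sd A (sd B C)" by (auto simp: sd_def)
lemma sd_e: "sd A {} = A" "sd {} A = A" "sd A A = {}" by (auto simp: sd_def)

lemma NN_app: "NN (a@y) = sd (NN a) (cj a (NN y))"
proof (induction a)
  case Nil then show ?case by (simp add: sd_e cj_nil)
next
  case (Cons s a)
  have "NN ((s#a)@y) = sd (cls [s]) (sd (cj [s] (NN a)) (cj [s] (cj a (NN y))))"
    by (simp add: Cons cj_sd)
  also have "\<dots> = sd (NN (s#a)) (cj (s#a) (NN y))"
    using cj_app[of "[s]" a] by (simp add: sd_assoc)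
  finally show ?case .
qed

lemma cj_cls: "set a \<subseteq> S \<Longrightarrow> cj a (cls u) = cls (a@u@rev a)"
proof -
  assume a: "set a \<subseteq> S"
  have "ceq u (rev a @ v @ a) \<longleftrightarrow> ceq (a@u@rev a) v" for v
  proof
    assume h: "ceq u (rev a @ v @ a)"
    have "ceq (a@u@rev a) (a @ (rev a @ v @ a) @ rev a)" by (rule ceq_cong[OF h])
    moreover have "ceq ((a @ rev a) @ v @ (a @ rev a)) ([] @ v @ [])"
      using ceq_app[OF self_inv[OF a] ceq_app[OF ceq_r self_inv[OF a]]] .
    ultimately show "ceq (a@u@rev a) v" by simp (meson ceq_t)
  next
    assume h: "ceq (a@u@rev a) v"
    have "ceq (rev a @ (a@u@rev a) @ a) (rev a @ v @ a)" by (rule ceq_cong[OF h])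
    moreover have "ceq ((rev a @ a) @ u @ (rev a @ a)) ([] @ u @ [])"
      using ceq_app[OF self_inv'[OF a] ceq_app[OF ceq_r self_inv'[OF a]]] .
    ultimately show "ceq u (rev a @ v @ a)" by simp (meson ceq_t ceq_s)
  qed
  then show ?thesis by (auto simp: cj_def cls_def)
qed

lemma NN_single: "NN [s] = cls [s]" by (simp add: sd_e cj_empty)

lemma NN_snoc: "set x \<subseteq> S \<Longrightarrow> NN (x@[s]) = sd (NN x) (cls (x@[s]@rev x))"
  by (simp only: NN_app NN_single cj_cls)

lemma cls_eq: "ceq u v \<Longrightarrow> cls u = cls v"
  unfolding cls_def by (rule set_eqI) (simp, meson ceq_s ceq_t)

lemma NN_closed': "ceq v w \<Longrightarrow> v \<in> NN x \<longleftrightarrow> w \<in> NN x"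
proof (induction x arbitrary: v w)
  case Nil then show ?case by simp
next
  case (Cons s x)
  have "[s] @ v @ [s] \<in> NN x \<longleftrightarrow> [s] @ w @ [s] \<in> NN x"
    using Cons.IH[OF ceq_cong[OF Cons.prems]] .
  moreover have "ceq [s] v \<longleftrightarrow> ceq [s] w" using Cons.prems by (meson ceq_s ceq_t)
  ultimately show ?case by (auto simp: sd_def cls_def cj_def)
qed

lemma NN_closed: "v \<in> NN x \<Longrightarrow> ceq v w \<Longrightarrow> w \<in> NN x"
  using NN_closed' by blast

end



context racg begin

lemma cj_id: "ceq a [] \<Longrightarrow> ceq (rev a) [] \<Longrightarrow> cj a (NN x) = NN x"
proof -
  assume a: "ceq a []" and ra: "ceq (rev a) []"
  have "ceq (rev a @ v @ a) ([] @ v @ [])" for v using ceq_app[OF ra ceq_app[OF ceq_r a]] .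
  then show ?thesis unfolding cj_def using NN_closed' by auto
qed

lemma NN_blk: "s\<in>S \<Longrightarrow> t\<in>S \<Longrightarrow> m s t = enat k \<Longrightarrow> NN (concat (replicate k [s,t])) = {}"
proof -
  assume s: "s\<in>S" and t: "t\<in>S" and k: "m s t = enat k"
  from blk[OF s t k] consider "s = t" "k = 1" | "k = 2" by auto
  then show ?thesis
  proof cases
    case 1
    have "NN [s,s] = sd (NN [s]) (cls ([s]@[s]@[s]))" using NN_snoc[of "[s]" s] s by simp
    also have "cls ([s]@[s]@[s]) = cls [s]" using snoc2[OF s, of "[s]"] by (simp add: cls_eq)
    finally show ?thesis using 1 by (simp add: sd_e cj_empty)
  next
    case 2
    then have m2: "m s t = 2" using k by (simp add: numeral_eq_enat)
    have e: "ceq [s,t,s,t] []" by (rule stst[OF s t m2])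
    have tt: "ceq [t,t] []" by (rule ss[OF t])
    have a: "ceq [s,t,s] [t]"
    proof -
      have "ceq ([s,t,s]@[t,t]) ([s,t,s]@[])" by (rule ceq_app[OF ceq_r tt])
      moreover have "ceq ([s,t,s,t] @ [t]) ([] @ [t])" by (rule ceq_app[OF e ceq_r])
      ultimately show ?thesis by simp (meson ceq_s ceq_t)
    qed
    have b: "ceq [s,t,s,t,s] [s]" using ceq_app[OF e ceq_r, of "[s]"] by simp
    have c: "ceq [s,t,s,t,s,t,s] [t]" using ceq_app[OF e a] by simp
    have "NN [s,t,s,t] = sd (sd (sd (cls [s]) (cls [s,t,s])) (cls [s,t,s,t,s])) (cls [s,t,s,t,s,t,s])"
      using NN_snoc[of "[s]" t] NN_snoc[of "[s,t]" s] NN_snoc[of "[s,t,s]" t] s t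
      by (simp del: NN.simps add: NN_single)
    also have "\<dots> = {}" using cls_eq[OF a] cls_eq[OF b] cls_eq[OF c] by (auto simp: sd_def)
    finally show ?thesis using 2 by (simp add: numeral_2_eq_2)
  qed
qed

lemma NN_cong: "ceq u v \<Longrightarrow> NN u = NN v"
proof (induction rule: cox_eq.induct)
  case (rel s t k xs ys)
  let ?b = "concat (replicate k [s,t])"
  have e: "ceq ?b []" using cox_eq.rel[of s S t m k "[]" "[]", OF rel] by simp
  have mts: "m t s = enat k" using rel msym by auto
  have "ceq (rev ?b) []" using rev_cong[OF e] by simp
  then have "cj ?b (NN ys) = NN ys" using cj_id e by blast
  then have "NN (?b @ ys) = NN ys" using NN_app[of ?b ys] NN_blk[OF rel] by (simp add: sd_e)
  then show ?case using NN_app[of xs "?b@ys"] NN_app[of xs ys] by simp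
qed auto

definition refl where "refl x i = take i x @ [x!i] @ rev (take i x)"

lemma NN_sub: "set x \<subseteq> S \<Longrightarrow> v \<in> NN x \<Longrightarrow> \<exists>i<length x. ceq (refl x i) v"
proof (induction x arbitrary: v rule: rev_induct)
  case Nil then show ?case by simp
next
  case (snoc s x)
  have x: "set x \<subseteq> S" using snoc by auto
  have r1: "i < length x \<Longrightarrow> refl (x@[s]) i = refl x i" for i
    by (simp add: refl_def nth_append)
  have r2: "refl (x@[s]) (length x) = x@[s]@rev x" by (simp add: refl_def)
  from snoc.prems(2) NN_snoc[OF x, of s] have "v \<in> NN x \<or> v \<in> cls (x@[s]@rev x)"
    by (auto simp: sd_def)
  then show ?case
  proof
    assume "v \<in> NN x"
    then obtain i where "i < length x" "ceq (refl x i) v" using snoc.IH x by blast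
    then show ?thesis using r1 by (intro exI[of _ i]) auto
  next
    assume "v \<in> cls (x@[s]@rev x)"
    then show ?thesis using r2 by (intro exI[of _ "length x"]) (auto simp: cls_def)
  qed
qed

lemma del0: "set p \<subseteq> S \<Longrightarrow> l \<in> S \<Longrightarrow> set q \<subseteq> S \<Longrightarrow> l' \<in> S \<Longrightarrow>
  ceq (p@[l]@rev p) (p@[l]@q@[l']@rev q@[l]@rev p) \<Longrightarrow> ceq (p@[l]@q@[l']) (p@q)"
proof -
  assume p: "set p \<subseteq> S" and l: "l \<in> S" and q: "set q \<subseteq> S" and l': "l' \<in> S"
    and h: "ceq (p@[l]@rev p) (p@[l]@q@[l']@rev q@[l]@rev p)"
  have "ceq ((p@[l]) @ rev p) ((p@[l]@q@[l']@rev q@[l]) @ rev p)" using h by simp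
  moreover have "set (rev p) \<subseteq> S" using p by simp
  ultimately have "ceq (p@[l]) (p@[l]@q@[l']@rev q@[l])" using cancel_r by blast
  then have "ceq ((p@[l]) @ []) ((p@[l]) @ (q@[l']@rev q@[l]))" by simp
  moreover have pl: "set (p@[l]) \<subseteq> S" using p l by simp
  ultimately have h1: "ceq [] (q@[l']@rev q@[l])" using cancel_l by blast
  have "ceq ([] @ [l]) ((q@[l']@rev q@[l]) @ [l])" by (rule ceq_app[OF h1 ceq_r])
  moreover have "ceq ((q@[l']@rev q) @ [l,l]) ((q@[l']@rev q) @ [])" by (rule ceq_app[OF ceq_r ss[OF l]])
  ultimately have h2: "ceq [l] (q@[l']@rev q)" by simp (meson ceq_t)
  have "ceq ([l] @ q) ((q@[l']@rev q) @ q)" by (rule ceq_app[OF h2 ceq_r])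
  moreover have "ceq ((q@[l']) @ (rev q @ q)) ((q@[l']) @ [])" by (rule ceq_app[OF ceq_r self_inv'[OF q]])
  ultimately have h3: "ceq ([l]@q) (q@[l'])" by simp (meson ceq_t)
  have "ceq ((p@[l]) @ (q@[l'])) ((p@[l]) @ ([l]@q))" by (rule ceq_app[OF ceq_r ceq_s[OF h3]])
  moreover have "ceq (p @ [l,l] @ q) (p @ [] @ q)" by (rule ceq_cong[OF ss[OF l]])
  ultimately show ?thesis by simp (meson ceq_t)
qed

lemma del_snoc: "set v \<subseteq> S \<Longrightarrow> s \<in> S \<Longrightarrow> i < length v \<Longrightarrow> ceq (refl v i) (v@[s]@rev v)
  \<Longrightarrow> ceq (v@[s]) (take i v @ drop (Suc i) v)"
proof -
  assume v: "set v \<subseteq> S" and s: "s\<in>S" and i: "i < length v" and h: "ceq (refl v i) (v@[s]@rev v)"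
  define p where "p = take i v"
  define l where "l = v!i"
  define q where "q = drop (Suc i) v"
  have vd: "v = p @ [l] @ q" unfolding p_def l_def q_def using id_take_nth_drop[OF i] by simp
  have p: "set p \<subseteq> S" "l \<in> S" "set q \<subseteq> S" using v unfolding vd by auto
  have e1: "refl v i = p@[l]@rev p" unfolding refl_def p_def l_def by simp
  have e2: "v@[s]@rev v = p@[l]@q@[s]@rev q@[l]@rev p" using vd by simp
  have "ceq (p@[l]@rev p) (p@[l]@q@[s]@rev q@[l]@rev p)" using h e1 e2 by simp
  from del0[OF p(1,2,3) s this] have "ceq (p@[l]@q@[s]) (p@q)" .
  moreover have "v@[s] = p@[l]@q@[s]" using vd by simp
  ultimately have "ceq (v@[s]) (p@q)" by simp
  then show ?thesis unfolding p_def q_def .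
qed

lemma desc1: "set z \<subseteq> S \<Longrightarrow> s \<in> S \<Longrightarrow> z@[s]@rev z \<in> NN z \<Longrightarrow> s \<in> cox_desc S m z"
proof -
  assume z: "set z \<subseteq> S" and s: "s\<in>S" and h: "z@[s]@rev z \<in> NN z"
  obtain v where v: "set v \<subseteq> S" "length v = cox_len S m z" "ceq v z" using len_ex[OF z] by blast
  have "ceq (z@[s]@rev z) (v@[s]@rev v)"
    using ceq_app[OF ceq_s[OF v(3)] ceq_app[OF ceq_r rev_cong[OF ceq_s[OF v(3)]]], of "[s]"] by simp
  moreover have "z@[s]@rev z \<in> NN v" using h NN_cong[OF v(3)] by simp
  ultimately have "v@[s]@rev v \<in> NN v" using NN_closed by blast
  then obtain i where i: "i < length v" "ceq (refl v i) (v@[s]@rev v)" using NN_sub[OF v(1)] by blast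
  have d: "ceq (v@[s]) (take i v @ drop (Suc i) v)" by (rule del_snoc[OF v(1) s i])
  have "ceq (take i v @ drop (Suc i) v) (z@[s])"
    using ceq_t[OF ceq_s[OF d] ceq_app[OF v(3) ceq_r]] .
  moreover have "set (take i v @ drop (Suc i) v) \<subseteq> S"
    using v(1) set_take_subset[of i v] set_drop_subset[of "Suc i" v] by auto
  ultimately have "cox_len S m (z@[s]) \<le> length (take i v @ drop (Suc i) v)" using len_le by blast
  also have "\<dots> < length v" using i by simp
  finally show ?thesis using v s unfolding cox_desc_def by simp
qed

lemma desc2: "set x \<subseteq> S \<Longrightarrow> s \<in> cox_desc S m x \<Longrightarrow> x@[s]@rev x \<in> NN x"
proof -
  assume x: "set x \<subseteq> S" and d: "s \<in> cox_desc S m x"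
  then have s: "s\<in>S" and lt: "cox_len S m (x@[s]) < cox_len S m x" unfolding cox_desc_def by auto
  define z where "z = x@[s]"
  have z: "set z \<subseteq> S" using x s z_def by auto
  have "z@[s]@rev z \<notin> NN z"
  proof
    assume "z@[s]@rev z \<in> NN z"
    from desc1[OF z s this] have "cox_len S m (z@[s]) < cox_len S m z" unfolding cox_desc_def by simp
    moreover have "cox_len S m (z@[s]) = cox_len S m x" unfolding z_def using len_cong[OF snoc2[OF s]] by simp
    ultimately show False using lt z_def by simp
  qed
  moreover have "ceq (z@[s]@rev z) (x@[s]@rev x)"
  proof -
    have "ceq (x @ [s,s] @ ([s] @ rev x)) (x @ [] @ ([s] @ rev x))" by (rule ceq_cong[OF ss[OF s]])
    then show ?thesis unfolding z_def by simp
  qed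
  ultimately have "x@[s]@rev x \<notin> NN z" using NN_closed' by blast
  moreover have "NN z = sd (NN x) (cls (x@[s]@rev x))" unfolding z_def by (rule NN_snoc[OF x])
  moreover have "x@[s]@rev x \<in> cls (x@[s]@rev x)" by (simp add: cls_def ceq_r)
  ultimately show ?thesis unfolding sd_def by blast
qed

end



definition gD :: "'a \<Rightarrow> 'a \<Rightarrow> 'a \<Rightarrow> bool \<times> int" where
  "gD r s x = (if x = r then (True,0) else if x = s then (True,1) else (False,0))"
definition compD :: "bool \<times> int \<Rightarrow> bool \<times> int \<Rightarrow> bool \<times> int" where
  "compD a b = (fst a \<noteq> fst b, (if fst a then - snd b else snd b) + snd a)"
fun phiD :: "'a \<Rightarrow> 'a \<Rightarrow> 'a list \<Rightarrow> bool \<times> int" where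
  "phiD r s [] = (False,0)" | "phiD r s (x#xs) = compD (gD r s x) (phiD r s xs)"
definition lamD :: "bool \<times> int \<Rightarrow> int" where
  "lamD a = (if fst a then \<bar>2*snd a - 1\<bar> else 2*\<bar>snd a\<bar>)"
fun alt :: "'a \<Rightarrow> 'a \<Rightarrow> nat \<Rightarrow> 'a list" where
  "alt c d 0 = []" | "alt c d (Suc n) = alt d c n @ [c]"
definition InvD :: "'a \<Rightarrow> 'a \<Rightarrow> 'a \<Rightarrow> bool \<times> int \<Rightarrow> bool" where
  "InvD r s c p = (if c = r then (\<not>fst p \<longrightarrow> snd p \<ge> 0) \<and> (fst p \<longrightarrow> snd p \<le> 0)
                    else (\<not>fst p \<longrightarrow> snd p \<le> 0) \<and> (fst p \<longrightarrow> snd p \<ge> 1))"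

lemma compD_assoc: "compD a (compD b c) = compD (compD a b) c"
  by (cases a; cases b; cases c) (auto simp: compD_def algebra_simps)

lemma compD_id: "compD (False,0) a = a" "compD a (False,0) = a"
  by (cases a; auto simp: compD_def)+

lemma phiD_app: "phiD r s (a@b) = compD (phiD r s a) (phiD r s b)"
  by (induction a) (auto simp: compD_id compD_assoc)

lemma phiD_len: "lamD (phiD r s v) \<le> int (length v)"
proof (induction v)
  case Nil then show ?case by (simp add: lamD_def)
next
  case (Cons x v)
  obtain f c where p: "phiD r s v = (f,c)" by (cases "phiD r s v")
  have "lamD (compD (gD r s x) (f,c)) \<le> lamD (f,c) + 1"
    unfolding gD_def compD_def lamD_def by (auto simp: abs_if)
  then show ?case using Cons p by simp
qed

lemma alt_lam: "r \<noteq> s \<Longrightarrow> (c = r \<and> d = s) \<or> (c = s \<and> d = r) \<Longrightarrow>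
  lamD (phiD r s (alt c d n)) = int n \<and> InvD r s c (phiD r s (alt c d n))"
proof (induction n arbitrary: c d)
  case 0 then show ?case by (auto simp: lamD_def InvD_def)
next
  case (Suc n)
  have IH: "lamD (phiD r s (alt d c n)) = int n \<and> InvD r s d (phiD r s (alt d c n))"
    using Suc by blast
  obtain f x where p: "phiD r s (alt d c n) = (f,x)" by (cases "phiD r s (alt d c n)")
  have e: "phiD r s (alt c d (Suc n)) = compD (f,x) (gD r s c)"
    using p by (simp add: phiD_app compD_id)
  show ?case using IH Suc.prems unfolding e p
    by (auto simp: gD_def compD_def lamD_def InvD_def)
qed

lemma length_alt: "length (alt c d n) = n"
  by (induction n arbitrary: c d) auto

lemma set_alt: "set (alt c d n) \<subseteq> {c,d}"
  by (induction n arbitrary: c d) auto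

context racg begin

lemma phiD_cong: assumes r: "r\<in>S" and s: "s\<in>S" and mi: "m r s = \<infinity>"
  shows "ceq u v \<Longrightarrow> phiD r s u = phiD r s v"
proof (induction rule: cox_eq.induct)
  case (rel a b k xs ys)
  have "phiD r s (concat (replicate k [a,b])) = (False,0)"
  proof -
    from blk[OF rel(1,2,3)] consider "a = b" "k = 1" | "a \<noteq> b" "k = 2" by auto
    then show ?thesis
    proof cases
      case 1 then show ?thesis by (auto simp: gD_def compD_def)
    next
      case 2
      have mab: "m a b = 2" using rel(3) 2 by (simp add: numeral_eq_enat)
      have "\<not> ({a,b} = {r,s})" using mab rel r s mi msym 2 by (auto simp: doubleton_eq_iff)
      then show ?thesis using 2 by (auto simp: gD_def compD_def numeral_2_eq_2)
    qed
  qed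
  then show ?case by (simp add: phiD_app compD_id)
qed auto

lemma alt_red: "r\<in>S \<Longrightarrow> s\<in>S \<Longrightarrow> m r s = \<infinity> \<Longrightarrow> (c = r \<and> d = s) \<or> (c = s \<and> d = r) \<Longrightarrow>
  ceq (alt c d n) v \<Longrightarrow> n \<le> length v"
proof -
  assume r: "r\<in>S" and s: "s\<in>S" and mi: "m r s = \<infinity>" and cd: "(c = r \<and> d = s) \<or> (c = s \<and> d = r)"
    and h: "ceq (alt c d n) v"
  have rs: "r \<noteq> s" using mi cm r unfolding coxeter_matrix_def by auto
  have "int n = lamD (phiD r s v)" using alt_lam[OF rs cd, of n] phiD_cong[OF r s mi h] by simp
  also have "\<dots> \<le> int (length v)" by (rule phiD_len)
  finally show ?thesis by simp
qed

end



context racg begin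

lemma sts: "s\<in>S \<Longrightarrow> t\<in>S \<Longrightarrow> m s t = 2 \<Longrightarrow> ceq [s,t,s] [t]"
proof -
  assume s: "s\<in>S" and t: "t\<in>S" and m2: "m s t = 2"
  have e: "ceq [s,t,s,t] []" by (rule stst[OF s t m2])
  have "ceq ([s,t,s]@[t,t]) ([s,t,s]@[])" by (rule ceq_app[OF ceq_r ss[OF t]])
  moreover have "ceq ([s,t,s,t] @ [t]) ([] @ [t])" by (rule ceq_app[OF e ceq_r])
  ultimately show ?thesis by simp (meson ceq_s ceq_t)
qed

lemma two_desc:
  assumes y: "set y \<subseteq> S" and r: "r\<in>S" and s: "s\<in>S" and mi: "m r s = \<infinity>"
    and dr: "r \<in> cox_desc S m y" and ds: "s \<in> cox_desc S m y"
  shows False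
proof -
  have claim: "\<exists>u c d. ((c = r \<and> d = s) \<or> (c = s \<and> d = r)) \<and> set u \<subseteq> S \<and>
      length u + Suc k = cox_len S m y \<and> ceq (u @ alt c d (Suc k)) y" for k
  proof (induction k)
    case 0
    have yr: "set (y@[r]) \<subseteq> S" using y r by simp
    obtain u where u: "set u \<subseteq> S" "length u = cox_len S m (y@[r])" "ceq u (y@[r])"
      using len_ex[OF yr] by blast
    have lt: "cox_len S m (y@[r]) < cox_len S m y" using dr unfolding cox_desc_def by simp
    have "cox_len S m y = cox_len S m ((y@[r])@[r])" using len_cong[OF snoc2[OF r, of y]] by simp
    also have "\<dots> \<le> cox_len S m (y@[r]) + 1" by (rule len_snoc_le[OF yr r])
    finally have le: "cox_len S m y \<le> cox_len S m (y@[r]) + 1" .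
    have "ceq (u@[r]) ((y@[r])@[r])" by (rule ceq_app[OF u(3) ceq_r])
    then have "ceq (u@[r]) y" using snoc2[OF r, of y] by simp (meson ceq_t)
    then show ?case using u lt le by (intro exI[of _ u] exI[of _ r] exI[of _ s]) auto
  next
    case (Suc k)
    then obtain u c d where cd: "(c = r \<and> d = s) \<or> (c = s \<and> d = r)" and u: "set u \<subseteq> S"
      and len: "length u + Suc k = cox_len S m y" and eq: "ceq (u @ alt c d (Suc k)) y" by blast
    define a where "a = alt c d (Suc k)"
    define x where "x = u @ a"
    have cdS: "c \<in> S" "d \<in> S" using cd r s by auto
    have aS: "set a \<subseteq> S" using set_alt[of c d "Suc k"] cdS unfolding a_def by auto
    have xS: "set x \<subseteq> S" using u aS unfolding x_def by simp
    have lx: "length x = cox_len S m y" using len unfolding x_def a_def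
      by (simp add: length_alt)
    have xy: "ceq x y" using eq unfolding x_def a_def .
    have "d \<in> cox_desc S m y" using cd dr ds by auto
    then have dx: "d \<in> cox_desc S m x" using desc_cong[OF xy] by simp
    from desc2[OF xS dx] obtain i where i: "i < length x" "ceq (refl x i) (x@[d]@rev x)"
      using NN_sub[OF xS] by blast
    have dl: "ceq (x@[d]) (take i x @ drop (Suc i) x)" by (rule del_snoc[OF xS cdS(2) i])
    have ad: "a @ [d] = alt d c (Suc (Suc k))" unfolding a_def by simp
    show ?case
    proof (cases "i < length u")
      case True
      define u' where "u' = take i u @ drop (Suc i) u"
      have e: "take i x @ drop (Suc i) x = u' @ a" unfolding x_def u'_def using True by simp
      have "ceq y (x@[d]@[d])" using ceq_s[OF snoc2[OF cdS(2), of x]] xy by (meson ceq_t ceq_s)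
      moreover have "ceq ((x@[d])@[d]) ((u'@a)@[d])" using ceq_app[OF dl ceq_r] e by simp
      ultimately have "ceq (u' @ alt d c (Suc (Suc k))) y" using ad by simp (meson ceq_t ceq_s)
      moreover have "set u' \<subseteq> S" using u set_take_subset[of i u] set_drop_subset[of "Suc i" u]
        unfolding u'_def by auto
      moreover have "length u' + Suc (Suc k) = cox_len S m y" using True len unfolding u'_def by simp
      ultimately show ?thesis using cd by (intro exI[of _ u'] exI[of _ d] exI[of _ c]) auto
    next
      case False
      define i' where "i' = i - length u"
      have i': "i' < Suc k" using i(1) False unfolding i'_def x_def a_def by (simp add: length_alt)
      have e: "take i x @ drop (Suc i) x = u @ (take i' a @ drop (Suc i') a)"
        unfolding x_def i'_def using False by (simp add: Suc_diff_le)
      have "ceq (u @ (a@[d])) (u @ (take i' a @ drop (Suc i') a))" using dl e unfolding x_def by simp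
      then have "ceq (alt d c (Suc (Suc k))) (take i' a @ drop (Suc i') a)" using cancel_l[OF u] ad by simp
      from alt_red[OF r s mi _ this] cd have "Suc (Suc k) \<le> length (take i' a @ drop (Suc i') a)" by auto
      also have "\<dots> = k" using i' unfolding a_def by (simp add: length_alt)
      finally show ?thesis by simp
    qed
  qed
  from claim[of "cox_len S m y"] show False by auto
qed

lemma Lm:
  assumes x: "set x \<subseteq> S" and s: "s\<in>S" and r: "r\<in>S" and nd: "s \<notin> cox_desc S m x"
    and dr: "r \<in> cox_desc S m (x@[s])" and rs: "r \<noteq> s"
  shows "m r s = 2 \<and> r \<in> cox_desc S m x"
proof -
  have xs: "set (x@[s]) \<subseteq> S" using x s by simp
  have sd: "s \<in> cox_desc S m (x@[s])" by (rule nondesc_desc[OF x s nd])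
  have m2: "m r s = 2"
  proof (rule ccontr)
    assume "m r s \<noteq> 2"
    then have "m r s = \<infinity>" using ra r s rs unfolding right_angled_def by auto
    from two_desc[OF xs r s this dr sd] show False .
  qed
  have m2': "m s r = 2" using m2 msym r s by simp
  have "(x@[s])@[r]@rev(x@[s]) \<in> NN (x@[s])" by (rule desc2[OF xs dr])
  moreover have "ceq ((x@[s])@[r]@rev(x@[s])) (x@[r]@rev x)"
    using ceq_cong[OF sts[OF s r m2'], of x "rev x"] by simp
  ultimately have "x@[r]@rev x \<in> NN (x@[s])" using NN_closed by blast
  then have "x@[r]@rev x \<in> sd (NN x) (cls (x@[s]@rev x))" using NN_snoc[OF x, of s] by simp
  moreover have "x@[r]@rev x \<notin> cls (x@[s]@rev x)"
  proof
    assume "x@[r]@rev x \<in> cls (x@[s]@rev x)"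
    then have "ceq (x@([s]@rev x)) (x@([r]@rev x))" by (simp add: cls_def)
    then have "ceq ([s]@rev x) ([r]@rev x)" by (rule cancel_l[OF x])
    then have "ceq [s] [r]" using cancel_r[of "rev x"] x by simp
    then show False using letter_ne[of s r] rs by blast
  qed
  ultimately have "x@[r]@rev x \<in> NN x" unfolding sd_def by blast
  then show ?thesis using desc1[OF x r] m2 by blast
qed

lemma ord_inf: "s\<in>S \<Longrightarrow> t\<in>S \<Longrightarrow> cox_order_inf S m s t \<Longrightarrow> s \<noteq> t \<and> m s t \<noteq> 2"
proof -
  assume s: "s\<in>S" and t: "t\<in>S" and oi: "cox_order_inf S m s t"
  have "s \<noteq> t"
  proof
    assume "s = t"
    then have "ceq (concat (replicate 1 [s,t])) []" using ss[OF s] by simp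
    moreover have "\<not> ceq (concat (replicate 1 [s,t])) []"
      using oi[unfolded cox_order_inf_def, rule_format, of 1] by simp
    ultimately show False by blast
  qed
  moreover have "m s t \<noteq> 2"
  proof
    assume "m s t = 2"
    then have "ceq (concat (replicate 2 [s,t])) []" using stst[OF s t] by (simp add: numeral_2_eq_2)
    moreover have "\<not> ceq (concat (replicate 2 [s,t])) []"
      using oi[unfolded cox_order_inf_def, rule_format, of 2] by simp
    ultimately show False by blast
  qed
  ultimately show ?thesis by simp
qed

end



theorem lemma8p4:
  fixes S :: "'a set" and m :: "'a \<Rightarrow> 'a \<Rightarrow> enat" and w t :: "'a list"
  assumes "coxeter_matrix S m" and "right_angled S m" and "cox_irreducible S m"
    and "set w \<subseteq> S"
    and "t \<noteq> []"
    and "hd t \<notin> cox_desc S m w"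
    and "\<forall>i. i + 1 < length t \<longrightarrow> cox_order_inf S m (t ! i) (t ! (i + 1))"
    and "set t = S"
  shows "w @ t \<in> cox_WT S m {last t}"
proof -
  interpret racg S m by (rule racg.intro) (rule assms)+
  define n where "n = length t"
  define X where "X j = w @ take j t" for j
  have n1: "n \<ge> 1" using assms(5) unfolding n_def by (cases t) auto
  have tS: "t!i \<in> S" if "i < n" for i using assms(8) nth_mem[of i t] that unfolding n_def by auto
  have XS: "set (X j) \<subseteq> S" for j
    using assms(4,8) set_take_subset[of j t] unfolding X_def by auto
  have Xs: "X (Suc j) = X j @ [t!j]" if "Suc j \<le> n" for j
    using that unfolding X_def n_def by (simp add: take_Suc_conv_app_nth)
  have oi: "t!j \<noteq> t!(Suc j) \<and> m (t!j) (t!(Suc j)) \<noteq> 2" if "Suc j < n" for j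
  proof -
    have j1: "j < n" "Suc j < n" using that by auto
    have "cox_order_inf S m (t!j) (t!(j+1))" using assms(7) that unfolding n_def by simp
    then show ?thesis using ord_inf[OF tS[OF j1(1)] tS[OF j1(2)]] by simp
  qed
  have A: "t!j \<notin> cox_desc S m (X j)" if "j < n" for j
    using that
  proof (induction j)
    case 0
    then show ?case using assms(5,6) unfolding X_def by (simp add: hd_conv_nth)
  next
    case (Suc j)
    show ?case
    proof
      assume d: "t!(Suc j) \<in> cox_desc S m (X (Suc j))"
      have j1: "j < n" "Suc j < n" using Suc.prems by auto
      have "t!j \<notin> cox_desc S m (X j)" using Suc.IH j1 by blast
      moreover have "t!(Suc j) \<in> cox_desc S m (X j @ [t!j])" using d Xs[of j] j1 by simp
      moreover have "t!(Suc j) \<noteq> t!j" using oi[OF j1(2)] by metis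
      ultimately have "m (t!(Suc j)) (t!j) = 2"
        using Lm[OF XS tS[OF j1(1)] tS[OF j1(2)]] by blast
      then have "m (t!j) (t!(Suc j)) = 2" using msym[OF tS[OF j1(1)] tS[OF j1(2)]] by simp
      then show False using oi[OF j1(2)] by simp
    qed
  qed
  have wt: "w @ t = X n" unfolding X_def n_def by simp
  have B: "last t \<in> cox_desc S m (w@t)"
  proof -
    have "last t = t!(n-1)" using assms(5) unfolding n_def by (simp add: last_conv_nth)
    moreover have "X n = X (n-1) @ [t!(n-1)]" using Xs[of "n-1"] n1 by simp
    moreover have n0: "n - 1 < n" using n1 by simp
    ultimately show ?thesis using nondesc_desc[OF XS tS[OF n0] A[OF n0]] n1 wt by simp
  qed
  have C: "r \<notin> set (take (Suc j) t)"
    if "Suc j \<le> n" "r \<in> cox_desc S m (X (Suc j))" "r \<noteq> t!j" for j r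
    using that
  proof (induction j)
    case 0
    then show ?case using n1 unfolding n_def by (cases t) auto
  next
    case (Suc j)
    have j1: "Suc j < n" "j < n" using Suc.prems(1) by auto
    have r: "r \<in> S" using Suc.prems(2) unfolding cox_desc_def by simp
    have "t!(Suc j) \<notin> cox_desc S m (X (Suc j))" using A[OF j1(1)] .
    moreover have "r \<in> cox_desc S m (X (Suc j) @ [t!(Suc j)])" using Suc.prems(2) Xs[of "Suc j"] j1 by simp
    ultimately have L: "m r (t!(Suc j)) = 2 \<and> r \<in> cox_desc S m (X (Suc j))"
      using Lm[OF XS tS[OF j1(1)] r] Suc.prems(3) by blast
    have "r \<noteq> t!j"
    proof
      assume "r = t!j"
      then show False using L oi[OF j1(1)] by simp
    qed
    then have "r \<notin> set (take (Suc j) t)" using Suc.IH L j1 by simp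
    moreover have "take (Suc (Suc j)) t = take (Suc j) t @ [t!(Suc j)]"
      using Suc.prems(1) unfolding n_def by (simp add: take_Suc_conv_app_nth)
    ultimately show ?case using Suc.prems(3) by simp
  qed
  have "cox_desc S m (w@t) = {last t}"
  proof
    show "cox_desc S m (w@t) \<subseteq> {last t}"
    proof
      fix r assume r: "r \<in> cox_desc S m (w@t)"
      show "r \<in> {last t}"
      proof (rule ccontr)
        assume "r \<notin> {last t}"
        then have "r \<noteq> t!(n-1)" using assms(5) unfolding n_def by (simp add: last_conv_nth)
        moreover have "r \<in> cox_desc S m (X (Suc (n-1)))" using r wt n1 by simp
        ultimately have "r \<notin> set (take (Suc (n-1)) t)" using C[of "n-1" r] n1 by simp
        moreover have "r \<in> S" using r unfolding cox_desc_def by simp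
        ultimately show False using n1 assms(8) unfolding n_def by simp
      qed
    qed
    show "{last t} \<subseteq> cox_desc S m (w@t)" using B by simp
  qed
  then show ?thesis unfolding cox_WT_def using assms(4,8) by simp
qed



end
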